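(* Let $\vec{\alpha}=\langle\alpha_s:s\in[\mathbb{N}]^{<\infty}\rangle$ be a sequence of nonstandard hypernatural numbers. Then $([\mathbb{N}]^\infty,\vec{\alpha},\subseteq)$ is an $\vec{\alpha}$-Ramsey space: a set $\mathcal{X}\subseteq[\mathbb{N}]^\infty$ is $\vec{\alpha}$-Ramsey if and only if it has the Baire property with respect to the $\vec{\alpha}$-Ellentuck topology, and $\mathcal{X}$ is $\vec{\alpha}$-Ramsey null if and only if it is meager with respect to the $\vec{\alpha}$-Ellentuck topology.
   Context: Setting (Alpha-Theory of Benci–Di Nasso): ZFC together with a new symbol $\alpha$ satisfying: ($\alpha$1) every sequence $\varphi=\langle\varphi_i:i\in\mathbb{N}\rangle$ has a unique ideal value $\varphi[\alpha]$; ($\alpha$2) if $\varphi[\alpha]=\psi[\alpha]$ and $f\circ\varphi$, $f\circ\psi$ make sense then $(f\circ\varphi)[\alpha]=(f\circ\psi)[\alpha]$; ($\alpha$3) constant real sequences $r$ have ideal value $r$, and $\langle i\rangle$ has ideal value $\alpha\notin\mathbb{N}$; ($\alpha$4) if $\vartheta_i=\{\varphi_i,\psi_i\}$ then $\vartheta[\alpha]=\{\varphi[\alpha],\psi[\alpha]\}$; ($\alpha$5) the constant sequence $\emptyset$ has ideal value $\emptyset$, and for nonempty $\psi_i$, $\psi[\alpha]=\{\vartheta[\alpha]:\vartheta_i\in\psi_i\ \forall i\}$. ${}^*A$ is the ideal value of the constant sequence $A$; ${}^*\mathbb{N}\setminus\mathbb{N}$ is the set of nonstandard hypernatural numbers.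 $[X]^{<\infty}$, $[X]^\infty$: finite, resp. infinite, subsets of $X\subseteq\mathbb{N}$. For finite $s$, $s\sqsubseteq X$ means $s=\{j\in X:j\le i\}$ for some $i$. A tree on $\mathbb{N}$ is a nonempty $T\subseteq[\mathbb{N}]^{<\infty}$ closed under $\sqsubseteq$-initial segments; $[T]=\{X\in[\mathbb{N}]^\infty:$ every finite $s\sqsubseteq X$ is in $T\}$; stem $st(T)$ = $\sqsubseteq$-maximal $s\in T$ comparable with all elements of $T$; $T/s=\{t\in T:s\sqsubseteq t\}$. An $\vec{\alpha}$-tree is a tree $T$ with a stem, $T/st(T)\neq\emptyset$, and $s\cup\{\alpha_s\}\in{}^*T$ for all $s\in T/st(T)$. $\mathcal{X}\subseteq[\mathbb{N}]^\infty$ is $\vec{\alpha}$-Ramsey if for every $\vec{\alpha}$-tree $T$ there is an $\vec{\alpha}$-tree $S\subseteq T$ with $st(S)=st(T)$ and $[S]\subseteq\mathcal{X}$ or $[S]\cap\mathcal{X}=\emptyset$; $\vec{\alpha}$-Ramsey null if always $[S]\cap\mathcal{X}=\emptyset$ can be achieved. The $\vec{\alpha}$-Ellentuck topology on $[\mathbb{N}]^\infty$ is the topology with basis $\{[T]:T\text{ an }\vec{\alpha}\text{-tree}\}$. *)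

theory Defs
  imports "HOL-Analysis.Analysis"
begin

(* Finite and infinite subsets of nat are both represented as  nat set . *)

definition initseg :: "nat set \<Rightarrow> nat set \<Rightarrow> bool" (infix "\<sqsubseteq>" 50) where
  "s \<sqsubseteq> X \<longleftrightarrow> finite s \<and> (\<exists>i. s = {j \<in> X. j \<le> i})"

definition is_tree :: "nat set set \<Rightarrow> bool" where
  "is_tree T \<longleftrightarrow> T \<noteq> {} \<and> (\<forall>t\<in>T. finite t) \<and> (\<forall>t\<in>T. \<forall>s. s \<sqsubseteq> t \<longrightarrow> s \<in> T)"

definition body :: "nat set set \<Rightarrow> nat set set" where
  "body T = {X. infinite X \<and> (\<forall>s. s \<sqsubseteq> X \<longrightarrow> s \<in> T)}"

definition comparable_all :: "nat set set \<Rightarrow> nat set \<Rightarrow> bool" where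
  "comparable_all T s \<longleftrightarrow> s \<in> T \<and> (\<forall>t\<in>T. s \<sqsubseteq> t \<or> t \<sqsubseteq> s)"

definition is_stem :: "nat set set \<Rightarrow> nat set \<Rightarrow> bool" where
  "is_stem T s \<longleftrightarrow> comparable_all T s \<and> (\<forall>s'. comparable_all T s' \<longrightarrow> s' \<sqsubseteq> s)"

definition stem :: "nat set set \<Rightarrow> nat set" where
  "stem T = (THE s. is_stem T s)"

definition has_stem :: "nat set set \<Rightarrow> bool" where
  "has_stem T \<longleftrightarrow> (\<exists>s. is_stem T s)"

definition subtree_above :: "nat set set \<Rightarrow> nat set \<Rightarrow> nat set set" where
  "subtree_above T s = {t \<in> T. s \<sqsubseteq> t}"

text \<open>Model of the Alpha-Theory: the hyperextension is the ultrapower of the standard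
  universe by an ultrafilter U on nat (ideal value of a sequence phi is its class mod U,
  alpha is the class of the identity).\<close>
definition ultrafilter_on_nat :: "nat set set \<Rightarrow> bool" where
  "ultrafilter_on_nat U \<longleftrightarrow> UNIV \<in> U \<and> {} \<notin> U \<and>
     (\<forall>A B. A \<in> U \<and> A \<subseteq> B \<longrightarrow> B \<in> U) \<and>
     (\<forall>A B. A \<in> U \<and> B \<in> U \<longrightarrow> A \<inter> B \<in> U) \<and>
     (\<forall>A. A \<in> U \<or> - A \<in> U)"

text \<open>alpha (the class of the identity sequence) is not in nat, i.e. U is nonprincipal.\<close>
definition alpha_model :: "nat set set \<Rightarrow> bool" where
  "alpha_model U \<longleftrightarrow> ultrafilter_on_nat U \<and> (\<forall>n. {i. i \<noteq> n} \<in> U)"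

text \<open>A hypernatural number is represented by a sequence h :: nat => nat (its ideal value);
  it is nonstandard iff it differs from every standard n on a set in U.\<close>
definition nonstandard_hypernat :: "nat set set \<Rightarrow> (nat \<Rightarrow> nat) \<Rightarrow> bool" where
  "nonstandard_hypernat U h \<longleftrightarrow> (\<forall>n. {i. h i \<noteq> n} \<in> U)"

text \<open>The statement  s \<union> {alpha_s} \<in> *T : with alpha_s the ideal value of a s, the set
  s \<union> {alpha_s} is the ideal value of the sequence i \<mapsto> s \<union> {a s i}, and membership
  in *T holds iff it holds on a U-large set of indices.\<close>
definition in_star :: "nat set set \<Rightarrow> (nat \<Rightarrow> nat set) \<Rightarrow> nat set set \<Rightarrow> bool" where
  "in_star U \<phi> A \<longleftrightarrow> {i. \<phi> i \<in> A} \<in> U"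

definition alpha_tree :: "nat set set \<Rightarrow> (nat set \<Rightarrow> nat \<Rightarrow> nat) \<Rightarrow> nat set set \<Rightarrow> bool" where
  "alpha_tree U a T \<longleftrightarrow> is_tree T \<and> has_stem T \<and> subtree_above T (stem T) \<noteq> {} \<and>
     (\<forall>s \<in> subtree_above T (stem T). in_star U (\<lambda>i. s \<union> {a s i}) T)"

definition alpha_Ramsey :: "nat set set \<Rightarrow> (nat set \<Rightarrow> nat \<Rightarrow> nat) \<Rightarrow> nat set set \<Rightarrow> bool" where
  "alpha_Ramsey U a \<X> \<longleftrightarrow> (\<forall>T. alpha_tree U a T \<longrightarrow>
     (\<exists>S. alpha_tree U a S \<and> S \<subseteq> T \<and> stem S = stem T \<and>
          (body S \<subseteq> \<X> \<or> body S \<inter> \<X> = {})))"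

definition alpha_Ramsey_null :: "nat set set \<Rightarrow> (nat set \<Rightarrow> nat \<Rightarrow> nat) \<Rightarrow> nat set set \<Rightarrow> bool" where
  "alpha_Ramsey_null U a \<X> \<longleftrightarrow> (\<forall>T. alpha_tree U a T \<longrightarrow>
     (\<exists>S. alpha_tree U a S \<and> S \<subseteq> T \<and> stem S = stem T \<and> body S \<inter> \<X> = {}))"

definition alpha_Ellentuck :: "nat set set \<Rightarrow> (nat set \<Rightarrow> nat \<Rightarrow> nat) \<Rightarrow> nat set topology" where
  "alpha_Ellentuck U a = topology_generated_by {body T | T. alpha_tree U a T}"

definition nowhere_dense_in :: "'x topology \<Rightarrow> 'x set \<Rightarrow> bool" where
  "nowhere_dense_in X A \<longleftrightarrow> A \<subseteq> topspace X \<and> X interior_of (X closure_of A) = {}"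

definition meager_in :: "'x topology \<Rightarrow> 'x set \<Rightarrow> bool" where
  "meager_in X A \<longleftrightarrow> A \<subseteq> topspace X \<and>
     (\<exists>N :: nat \<Rightarrow> 'x set. (\<forall>n. nowhere_dense_in X (N n)) \<and> A \<subseteq> (\<Union>n. N n))"

definition Baire_property_in :: "'x topology \<Rightarrow> 'x set \<Rightarrow> bool" where
  "Baire_property_in X A \<longleftrightarrow> A \<subseteq> topspace X \<and>
     (\<exists>G. openin X G \<and> meager_in X ((A - G) \<union> (G - A)))"

end

theory Submission
  imports Defs
begin


lemma iseg_iff: "s \<sqsubseteq> X \<longleftrightarrow> finite s \<and> s \<subseteq> X \<and> (\<forall>x\<in>X. \<forall>y\<in>s. x \<le> y \<longrightarrow> x \<in> s) \<and> (s = {} \<longrightarrow> 0 \<notin> X)"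
proof
  assume "s \<sqsubseteq> X"
  then obtain i where i: "finite s" "s = {j \<in> X. j \<le> i}" unfolding initseg_def by blast
  have "s \<subseteq> X" using i by blast
  moreover have "\<forall>x\<in>X. \<forall>y\<in>s. x \<le> y \<longrightarrow> x \<in> s" unfolding i(2) by auto
  moreover have "s = {} \<longrightarrow> 0 \<notin> X" unfolding i(2) by auto
  ultimately show "finite s \<and> s \<subseteq> X \<and> (\<forall>x\<in>X. \<forall>y\<in>s. x \<le> y \<longrightarrow> x \<in> s) \<and> (s = {} \<longrightarrow> 0 \<notin> X)"
    using i by blast
next
  assume H: "finite s \<and> s \<subseteq> X \<and> (\<forall>x\<in>X. \<forall>y\<in>s. x \<le> y \<longrightarrow> x \<in> s) \<and> (s = {} \<longrightarrow> 0 \<notin> X)"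
  have fs: "finite s" and sX: "s \<subseteq> X" and dn: "\<And>x y. x \<in> X \<Longrightarrow> y \<in> s \<Longrightarrow> x \<le> y \<Longrightarrow> x \<in> s"
    and em: "s = {} \<Longrightarrow> 0 \<notin> X" using H by auto
  show "s \<sqsubseteq> X"
  proof (cases "s = {}")
    case True
    have "{j \<in> X. j \<le> (0::nat)} = {}" using em[OF True] by auto
    then have "s = {j \<in> X. j \<le> 0}" using True by simp
    then show ?thesis using fs unfolding initseg_def by blast
  next
    case False
    have mx: "Max s \<in> s" using fs False by (rule Max_in)
    have "\<And>y. y \<in> s \<Longrightarrow> y \<le> Max s" using fs by (rule Max_ge)
    then have "s \<subseteq> {j \<in> X. j \<le> Max s}" using sX by auto
    moreover have "{j \<in> X. j \<le> Max s} \<subseteq> s" using dn mx by auto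
    ultimately have "s = {j \<in> X. j \<le> Max s}" by (rule subset_antisym)
    then show ?thesis using fs unfolding initseg_def by blast
  qed
qed

lemma iseg_subset: "s \<sqsubseteq> X \<Longrightarrow> s \<subseteq> X"
  by (simp add: iseg_iff)

lemma iseg_finite: "s \<sqsubseteq> X \<Longrightarrow> finite s"
  by (simp add: iseg_iff)

lemma iseg_down: "s \<sqsubseteq> X \<Longrightarrow> x \<in> X \<Longrightarrow> y \<in> s \<Longrightarrow> x \<le> y \<Longrightarrow> x \<in> s"
  unfolding iseg_iff by blast

lemma iseg_empty: "{} \<sqsubseteq> X \<Longrightarrow> 0 \<notin> X"
  by (simp add: iseg_iff)

lemma iseg_refl: "finite s \<Longrightarrow> s \<sqsubseteq> s"
  by (simp add: iseg_iff)

lemma iseg_antisym: "s \<sqsubseteq> t \<Longrightarrow> t \<sqsubseteq> s \<Longrightarrow> s = t"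
  by (meson iseg_subset subset_antisym)

lemma iseg_trans: "s \<sqsubseteq> t \<Longrightarrow> t \<sqsubseteq> X \<Longrightarrow> s \<sqsubseteq> X"
proof -
  assume a: "s \<sqsubseteq> t" "t \<sqsubseteq> X"
  have 1: "finite s" "s \<subseteq> t" "\<forall>x\<in>t. \<forall>y\<in>s. x \<le> y \<longrightarrow> x \<in> s" "s = {} \<longrightarrow> 0 \<notin> t"
    using a(1) unfolding iseg_iff by auto
  have 2: "t \<subseteq> X" "\<forall>x\<in>X. \<forall>y\<in>t. x \<le> y \<longrightarrow> x \<in> t" "t = {} \<longrightarrow> 0 \<notin> X"
    using a(2) unfolding iseg_iff by auto
  have "s = {} \<longrightarrow> 0 \<notin> X"
  proof
    assume "s = {}"
    show "0 \<notin> X"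
    proof (cases "t = {}")
      case False then obtain y where "y \<in> t" by blast
      then show ?thesis using 1(4) 2(2) \<open>s = {}\<close> by fastforce
    qed (use 2 in auto)
  qed
  moreover have "\<forall>x\<in>X. \<forall>y\<in>s. x \<le> y \<longrightarrow> x \<in> s" using 1 2 by blast
  ultimately show ?thesis unfolding iseg_iff using 1 2 by blast
qed

lemma iseg_mono: "s \<sqsubseteq> X \<Longrightarrow> s \<subseteq> Y \<Longrightarrow> Y \<subseteq> X \<Longrightarrow> s \<sqsubseteq> Y"
  unfolding iseg_iff by blast

lemma iseg_comp: "s \<sqsubseteq> X \<Longrightarrow> t \<sqsubseteq> X \<Longrightarrow> s \<sqsubseteq> t \<or> t \<sqsubseteq> s"
proof -
  assume a: "s \<sqsubseteq> X" "t \<sqsubseteq> X"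
  show ?thesis
  proof (cases "s \<subseteq> t")
    case True then show ?thesis using a iseg_mono iseg_subset by blast
  next
    case False
    then obtain y where y: "y \<in> s" "y \<notin> t" by blast
    have "t \<subseteq> s"
    proof
      fix x assume "x \<in> t"
      show "x \<in> s"
      proof (cases "x \<le> y")
        case True then show ?thesis using iseg_down[OF a(1)] \<open>x \<in> t\<close> iseg_subset[OF a(2)] y by blast
      next
        case False then have "y \<le> x" by simp
        then have "y \<in> t" using iseg_down[OF a(2)] \<open>x \<in> t\<close> iseg_subset[OF a(1)] y by blast
        then show ?thesis using y by blast
      qed
    qed
    then show ?thesis using a iseg_mono iseg_subset by blast
  qed
qed

definition succ_ok :: "nat set \<Rightarrow> nat \<Rightarrow> bool" where
  "succ_ok t n \<longleftrightarrow> 0 < n \<and> (\<forall>j\<in>t. j < n)"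

lemma iseg_succ: "finite t \<Longrightarrow> succ_ok t n \<Longrightarrow> t \<sqsubseteq> insert n t"
  unfolding iseg_iff succ_ok_def by auto

lemma iseg_below_succ: "q \<sqsubseteq> insert n t \<Longrightarrow> finite t \<Longrightarrow> succ_ok t n \<Longrightarrow> q \<sqsubseteq> t \<or> q = insert n t"
proof -
  assume a: "q \<sqsubseteq> insert n t" "finite t" "succ_ok t n"
  have "t \<sqsubseteq> insert n t" using a iseg_succ by blast
  then have "q \<sqsubseteq> t \<or> t \<sqsubseteq> q" using a iseg_comp by blast
  moreover have "t \<sqsubseteq> q \<Longrightarrow> q = t \<or> q = insert n t"
  proof -
    assume "t \<sqsubseteq> q"
    then have "t \<subseteq> q" "q \<subseteq> insert n t" using a(1) iseg_subset by auto
    then show ?thesis by blast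
  qed
  ultimately show ?thesis using a iseg_refl by blast
qed

lemma iseg_exists_long:
  assumes "infinite X" "finite A" "A \<subseteq> X"
  shows "\<exists>q. q \<sqsubseteq> X \<and> A \<subseteq> q \<and> q \<noteq> {}"
proof -
  obtain x0 where x0: "x0 \<in> X" using assms(1) by (metis finite.emptyI ex_in_conv)
  define m where "m = Max (insert x0 A)"
  have "m \<in> insert x0 A" unfolding m_def using assms by (intro Max_in) auto
  then have mX: "m \<in> X" using assms x0 by blast
  define q where "q = {j \<in> X. j \<le> m}"
  have fq: "finite q" unfolding q_def by simp
  have "q \<sqsubseteq> X" unfolding initseg_def q_def using fq q_def by blast
  moreover have "A \<subseteq> q" unfolding q_def m_def using assms by auto
  moreover have "m \<in> q" using mX q_def by auto
  ultimately show ?thesis by blast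
qed

lemma iseg_next:
  assumes "infinite X" "t \<sqsubseteq> X"
  obtains n where "n \<in> X" "n \<notin> t" "succ_ok t n" "insert n t \<sqsubseteq> X"
proof -
  have ft: "finite t" using assms iseg_finite by blast
  have ne: "X - t \<noteq> {}" using assms ft finite_subset by auto
  define n where "n = (LEAST x. x \<in> X - t)"
  have nX: "n \<in> X - t" unfolding n_def using ne by (meson LeastI_ex ex_in_conv)
  have nmin: "\<And>x. x \<in> X - t \<Longrightarrow> n \<le> x" unfolding n_def by (simp add: Least_le)
  have tlt: "\<forall>j\<in>t. j < n"
  proof
    fix j assume "j \<in> t"
    show "j < n"
    proof (rule ccontr)
      assume "\<not> j < n" then have "n \<le> j" by simp
      then have "n \<in> t" using iseg_down[OF assms(2)] \<open>j \<in> t\<close> nX by blast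
      then show False using nX by blast
    qed
  qed
  have "succ_ok t n"
  proof -
    have "0 < n"
    proof (cases "t = {}")
      case True then have "0 \<notin> X" using assms(2) iseg_empty by blast
      then show ?thesis using nX by (cases n) auto
    next
      case False then show ?thesis using tlt by fastforce
    qed
    then show ?thesis unfolding succ_ok_def using tlt by blast
  qed
  moreover have "insert n t \<sqsubseteq> X"
    unfolding iseg_iff
  proof (intro conjI ballI impI)
    show "finite (insert n t)" using ft by simp
    show "insert n t \<subseteq> X" using nX assms(2) iseg_subset by blast
    fix x y assume xy: "x \<in> X" "y \<in> insert n t" "x \<le> y"
    show "x \<in> insert n t"
    proof (cases "y \<in> t")
      case True then show ?thesis using xy iseg_down[OF assms(2)] by blast
    next
      case False then have "y = n" using xy by blast
      show ?thesis
      proof (cases "x \<in> t")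
        case False then have "n \<le> x" using nmin xy by blast
        then show ?thesis using \<open>y = n\<close> xy by simp
      qed simp
    qed
  qed simp
  ultimately show ?thesis using that nX by blast
qed



lemma stem_unique: "is_stem T s1 \<Longrightarrow> is_stem T s2 \<Longrightarrow> s1 = s2"
  unfolding is_stem_def by (meson iseg_antisym)

lemma stem_eq: "is_stem T s \<Longrightarrow> stem T = s"
  unfolding stem_def by (rule the_equality) (simp_all add: stem_unique)

lemma stem_is: "has_stem T \<Longrightarrow> is_stem T (stem T)"
  unfolding has_stem_def using stem_eq by auto

lemma tree_closed: "is_tree T \<Longrightarrow> t \<in> T \<Longrightarrow> s \<sqsubseteq> t \<Longrightarrow> s \<in> T"
  unfolding is_tree_def by blast

lemma tree_finite: "is_tree T \<Longrightarrow> t \<in> T \<Longrightarrow> finite t"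
  unfolding is_tree_def by blast

lemma body_iff: "X \<in> body T \<longleftrightarrow> infinite X \<and> (\<forall>s. s \<sqsubseteq> X \<longrightarrow> s \<in> T)"
  unfolding body_def by simp

lemma body_mono: "S \<subseteq> T \<Longrightarrow> body S \<subseteq> body T"
  unfolding body_def by blast

locale AM =
  fixes U :: "nat set set" and a :: "nat set \<Rightarrow> nat \<Rightarrow> nat"
  assumes UM: "alpha_model U"
    and NS: "\<And>s. finite s \<Longrightarrow> nonstandard_hypernat U (a s)"
begin

lemma UF: "UNIV \<in> U" "{} \<notin> U" "\<And>A B. A \<in> U \<Longrightarrow> A \<subseteq> B \<Longrightarrow> B \<in> U"
   "\<And>A B. A \<in> U \<Longrightarrow> B \<in> U \<Longrightarrow> A \<inter> B \<in> U" "\<And>A. A \<notin> U \<Longrightarrow> - A \<in> U"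
  using UM unfolding alpha_model_def ultrafilter_on_nat_def by auto

lemma U_up: "A \<in> U \<Longrightarrow> A \<subseteq> B \<Longrightarrow> B \<in> U"
  by (rule UF(3))

lemma U_int: "A \<in> U \<Longrightarrow> B \<in> U \<Longrightarrow> A \<inter> B \<in> U"
  by (rule UF(4))

lemma U_ne: "A \<in> U \<Longrightarrow> \<exists>i. i \<in> A"
  using UF(2) by (cases "A = {}") auto

lemma U_UNIV: "UNIV \<in> U"
  by (rule UF(1))

lemma U_compl: "A \<notin> U \<Longrightarrow> - A \<in> U"
  by (rule UF(5))

lemma U_conj: "{i. P i} \<in> U \<Longrightarrow> {i. Q i} \<in> U \<Longrightarrow> {i. P i \<and> Q i} \<in> U"
  using U_int[of "{i. P i}" "{i. Q i}"] by (simp add: Collect_conj_eq)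

lemma U_mono: "{i. P i} \<in> U \<Longrightarrow> (\<And>i. P i \<Longrightarrow> Q i) \<Longrightarrow> {i. Q i} \<in> U"
  using U_up[of "{i. P i}" "{i. Q i}"] by blast

lemma U_fin_all: "finite F \<Longrightarrow> (\<And>x. x \<in> F \<Longrightarrow> {i. P x i} \<in> U) \<Longrightarrow> {i. \<forall>x\<in>F. P x i} \<in> U"
proof (induction F rule: finite_induct)
  case empty then show ?case using U_UNIV by simp
next
  case (insert x F)
  have "{i. P x i \<and> (\<forall>y\<in>F. P y i)} \<in> U" using insert by (intro U_conj) auto
  then show ?case by simp
qed

lemma avoid: "finite s \<Longrightarrow> finite F \<Longrightarrow> {i. a s i \<notin> F} \<in> U"
proof -
  assume fs: "finite s" and fF: "finite F"
  have "\<And>n. {i. a s i \<noteq> n} \<in> U" using NS[OF fs] unfolding nonstandard_hypernat_def by blast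
  then have "{i. \<forall>n\<in>F. a s i \<noteq> n} \<in> U" using U_fin_all[OF fF, of "\<lambda>n i. a s i \<noteq> n"] by blast
  then show ?thesis by (rule U_mono) blast
qed

lemma succ_U: "finite t \<Longrightarrow> {i. succ_ok t (a t i)} \<in> U"
proof -
  assume ft: "finite t"
  have "{i. a t i \<notin> {..Max (insert 0 t)}} \<in> U" using avoid[OF ft, of "{..Max (insert 0 t)}"] by blast
  then show ?thesis
  proof (rule U_mono)
    fix i assume "a t i \<notin> {..Max (insert 0 t)}"
    then have "Max (insert 0 t) < a t i" by simp
    moreover have "\<And>j. j \<in> insert 0 t \<Longrightarrow> j \<le> Max (insert 0 t)" using ft by simp
    ultimately show "succ_ok t (a t i)" unfolding succ_ok_def by fastforce
  qed
qed

lemma pick_succ: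
  assumes "finite t" "{i. P (a t i)} \<in> U" "finite F"
  obtains n where "P n" "succ_ok t n" "n \<notin> F"
proof -
  have "{i. P (a t i) \<and> succ_ok t (a t i)} \<in> U" using assms(2) succ_U[OF assms(1)] by (rule U_conj)
  then have "{i. (P (a t i) \<and> succ_ok t (a t i)) \<and> a t i \<notin> F} \<in> U" using avoid[OF assms(1,3)] by (rule U_conj)
  then obtain i where "P (a t i)" "succ_ok t (a t i)" "a t i \<notin> F" using U_ne by blast
  then show ?thesis using that by blast
qed

abbreviation AT where "AT T \<equiv> alpha_tree U a T"

lemma AT_props:
  assumes "AT T"
  shows "is_tree T" "stem T \<in> T" "finite (stem T)" "\<And>t. t \<in> T \<Longrightarrow> stem T \<sqsubseteq> t \<or> t \<sqsubseteq> stem T"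
    "\<And>t. t \<in> T \<Longrightarrow> stem T \<sqsubseteq> t \<Longrightarrow> {i. insert (a t i) t \<in> T} \<in> U"
proof -
  have tr: "is_tree T" and hs: "has_stem T" using assms unfolding alpha_tree_def by auto
  have st: "is_stem T (stem T)" using stem_is[OF hs] .
  show "is_tree T" by (rule tr)
  show "stem T \<in> T" using st unfolding is_stem_def comparable_all_def by blast
  then show "finite (stem T)" using tr tree_finite by blast
  show "\<And>t. t \<in> T \<Longrightarrow> stem T \<sqsubseteq> t \<or> t \<sqsubseteq> stem T" using st unfolding is_stem_def comparable_all_def by blast
  show "\<And>t. t \<in> T \<Longrightarrow> stem T \<sqsubseteq> t \<Longrightarrow> {i. insert (a t i) t \<in> T} \<in> U"
    using assms unfolding alpha_tree_def subtree_above_def in_star_def by simp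
qed

lemma mk_AT:
  assumes tr: "is_tree T" and sT: "s \<in> T" and cmp: "\<And>t. t \<in> T \<Longrightarrow> s \<sqsubseteq> t \<or> t \<sqsubseteq> s"
    and sc: "\<And>t. t \<in> T \<Longrightarrow> s \<sqsubseteq> t \<Longrightarrow> {i. insert (a t i) t \<in> T} \<in> U"
  shows "AT T" "stem T = s"
proof -
  have fs: "finite s" using tr sT tree_finite by blast
  have ss: "s \<sqsubseteq> s" using fs iseg_refl by blast
  have ca: "comparable_all T s" unfolding comparable_all_def using sT cmp by blast
  have "\<forall>s'. comparable_all T s' \<longrightarrow> s' \<sqsubseteq> s"
  proof (intro allI impI)
    fix s' assume c': "comparable_all T s'"
    then have s'T: "s' \<in> T" and c's: "s' \<sqsubseteq> s \<or> s \<sqsubseteq> s'" unfolding comparable_all_def using sT by auto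
    have fs': "finite s'" using tr s'T tree_finite by blast
    show "s' \<sqsubseteq> s"
    proof (cases "s' \<sqsubseteq> s")
      case False
      then have ss': "s \<sqsubseteq> s'" using c's by blast
      obtain n where n: "insert n s \<in> T" "succ_ok s n" "n \<notin> s'"
        using pick_succ[OF fs _ fs', of "\<lambda>n. insert n s \<in> T"] sc[OF sT ss] by blast
      have "s' \<sqsubseteq> insert n s \<or> insert n s \<sqsubseteq> s'" using c' n(1) unfolding comparable_all_def by blast
      then have "s' \<sqsubseteq> insert n s" using n(3) iseg_subset by blast
      then have "s' \<subseteq> s" using n(3) iseg_subset by blast
      then have "s' = s" using ss' iseg_subset by blast
      then show ?thesis using ss by simp
    qed
  qed
  then have ist: "is_stem T s" unfolding is_stem_def using ca by blast
  then show "stem T = s" by (rule stem_eq)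
  have "s \<in> subtree_above T (stem T)" unfolding subtree_above_def using sT ss \<open>stem T = s\<close> by simp
  moreover have "\<forall>t \<in> subtree_above T (stem T). in_star U (\<lambda>i. t \<union> {a t i}) T"
    unfolding subtree_above_def in_star_def using sc \<open>stem T = s\<close> by simp
  ultimately show "AT T" unfolding alpha_tree_def has_stem_def using tr ist by blast
qed

end


lemma finite_chain_subset:
  fixes f :: "nat \<Rightarrow> nat set"
  assumes "finite t" "t \<subseteq> (\<Union>k. f k)" "\<And>j k. j \<le> k \<Longrightarrow> f j \<subseteq> (f k :: nat set)"
  shows "\<exists>k. t \<subseteq> f k"
  using assms(1,2)
proof (induction t rule: finite_induct)
  case empty then show ?case by simp
next
  case (insert x t)
  then obtain k where k: "t \<subseteq> f k" by blast
  obtain j where j: "x \<in> f j" using insert.prems by blast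
  have "f k \<subseteq> f (max j k)" by (rule assms(3)) simp
  then have "t \<subseteq> f (max j k)" using k by blast
  have "f j \<subseteq> f (max j k)" by (rule assms(3)) simp
  then have "x \<in> f (max j k)" using j by blast
  then show ?case using \<open>t \<subseteq> f (max j k)\<close> by blast
qed

context AM begin

lemma stem_below_body:
  assumes T: "alpha_tree U a T" and X: "X \<in> body T"
  shows "stem T \<sqsubseteq> X"
proof -
  have inf: "infinite X" and seg: "\<And>s. s \<sqsubseteq> X \<Longrightarrow> s \<in> T" using X body_iff by auto
  have fs: "finite (stem T)" using AT_props[OF T] by blast
  have "X - stem T \<noteq> {}" using inf fs finite_subset by auto
  then obtain m where m: "m \<in> X" "m \<notin> stem T" by blast
  obtain q where q: "q \<sqsubseteq> X" "{m} \<subseteq> q" using iseg_exists_long[OF inf, of "{m}"] m by auto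
  have "q \<in> T" using seg q by blast
  then have "stem T \<sqsubseteq> q \<or> q \<sqsubseteq> stem T" using AT_props(4)[OF T] by blast
  moreover have "\<not> q \<sqsubseteq> stem T" using q m iseg_subset by blast
  ultimately show ?thesis using q iseg_trans by blast
qed

lemma body_nonempty:
  assumes T: "alpha_tree U a T"
  shows "\<exists>X. X \<in> body T"
proof -
  note P = AT_props[OF T]
  define nx where "nx = (\<lambda>t. SOME n. insert n t \<in> T \<and> succ_ok t n)"
  have nx: "\<And>t. t \<in> T \<Longrightarrow> stem T \<sqsubseteq> t \<Longrightarrow> insert (nx t) t \<in> T \<and> succ_ok t (nx t)"
  proof -
    fix t assume t: "t \<in> T" "stem T \<sqsubseteq> t"
    have ft: "finite t" using t P(1) tree_finite by blast
    obtain n where "insert n t \<in> T" "succ_ok t n"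
      using pick_succ[OF ft _ finite.emptyI, of "\<lambda>n. insert n t \<in> T"] P(5)[OF t] by blast
    then have "insert n t \<in> T \<and> succ_ok t n" by blast
    then show "insert (nx t) t \<in> T \<and> succ_ok t (nx t)" unfolding nx_def by (rule someI)
  qed
  define f where "f = rec_nat (stem T) (\<lambda>_ t. insert (nx t) t)"
  have f0: "f 0 = stem T" and fS: "\<And>k. f (Suc k) = insert (nx (f k)) (f k)" unfolding f_def by simp_all
  have inv: "\<And>k. f k \<in> T \<and> stem T \<sqsubseteq> f k"
  proof -
    fix k show "f k \<in> T \<and> stem T \<sqsubseteq> f k"
    proof (induction k)
      case 0 then show ?case using f0 P(2,3) iseg_refl by simp
    next
      case (Suc k)
      have ft: "finite (f k)" using Suc P(1) tree_finite by blast
      have h: "insert (nx (f k)) (f k) \<in> T \<and> succ_ok (f k) (nx (f k))" using nx Suc by blast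
      then have "f k \<sqsubseteq> insert (nx (f k)) (f k)" using iseg_succ ft by blast
      then have "stem T \<sqsubseteq> insert (nx (f k)) (f k)" using Suc iseg_trans by blast
      then show ?case using h fS[of k] by simp
    qed
  qed
  have sok: "\<And>k. succ_ok (f k) (nx (f k))" using nx inv by blast
  have mono: "\<And>j k. j \<le> k \<Longrightarrow> f j \<subseteq> f k"
  proof -
    fix j k :: nat assume "j \<le> k"
    then show "f j \<subseteq> f k"
    proof (induction k)
      case 0 then show ?case by simp
    next
      case (Suc k)
      show ?case
      proof (cases "j = Suc k")
        case False then have "f j \<subseteq> f k" using Suc by simp
        then show ?thesis using fS[of k] by blast
      qed simp
    qed
  qed
  define X where "X = (\<Union>k. f k)"
  have sm: "strict_mono (\<lambda>k. nx (f k))"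
  proof (rule strict_monoI_Suc)
    fix k
    have "nx (f k) \<in> f (Suc k)" using fS by simp
    then show "nx (f k) < nx (f (Suc k))" using sok[of "Suc k"] unfolding succ_ok_def by blast
  qed
  have "range (\<lambda>k. nx (f k)) \<subseteq> X"
  proof (rule image_subsetI)
    fix k have "nx (f k) \<in> f (Suc k)" using fS by simp
    then show "nx (f k) \<in> X" unfolding X_def by blast
  qed
  moreover have "infinite (range (\<lambda>k. nx (f k)))" using range_inj_infinite[OF strict_mono_imp_inj_on[OF sm]] .
  ultimately have infX: "infinite X" using finite_subset by blast
  have "\<And>s. s \<sqsubseteq> X \<Longrightarrow> s \<in> T"
  proof -
    fix s assume s: "s \<sqsubseteq> X"
    have "s \<subseteq> (\<Union>k. f k)" using s iseg_subset X_def by blast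
    then have "\<exists>k. s \<subseteq> f k" by (rule finite_chain_subset[OF iseg_finite[OF s] _ mono])
    then obtain k where k: "s \<subseteq> f k" by blast
    have "f k \<subseteq> X" unfolding X_def by blast
    then have "s \<sqsubseteq> f k" using iseg_mono[OF s k] by blast
    then show "s \<in> T" using tree_closed[OF P(1)] inv[of k] by blast
  qed
  then have "X \<in> body T" using infX unfolding body_iff by blast
  then show ?thesis by blast
qed

definition cone :: "nat set \<Rightarrow> nat set set" where
  "cone u = {t. finite t \<and> (t \<sqsubseteq> u \<or> u \<sqsubseteq> t)}"

lemma cone_AT:
  assumes fu: "finite u"
  shows "alpha_tree U a (cone u)" "stem (cone u) = u"
proof -
  have uc: "u \<in> cone u" unfolding cone_def using fu iseg_refl by blast
  have tr: "is_tree (cone u)" unfolding is_tree_def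
  proof (intro conjI ballI allI impI)
    show "cone u \<noteq> {}" using uc by blast
    show "\<And>t. t \<in> cone u \<Longrightarrow> finite t" unfolding cone_def by blast
    fix t s assume t: "t \<in> cone u" and st: "s \<sqsubseteq> t"
    have "s \<sqsubseteq> u \<or> u \<sqsubseteq> s"
    proof (cases "t \<sqsubseteq> u")
      case True then show ?thesis using st iseg_trans by blast
    next
      case False then have "u \<sqsubseteq> t" using t cone_def by blast
      then show ?thesis using st iseg_comp by blast
    qed
    then show "s \<in> cone u" unfolding cone_def using st iseg_finite by blast
  qed
  have cmp: "\<And>t. t \<in> cone u \<Longrightarrow> u \<sqsubseteq> t \<or> t \<sqsubseteq> u" unfolding cone_def by blast
  have sc: "\<And>t. t \<in> cone u \<Longrightarrow> u \<sqsubseteq> t \<Longrightarrow> {i. insert (a t i) t \<in> cone u} \<in> U"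
  proof -
    fix t assume t: "t \<in> cone u" "u \<sqsubseteq> t"
    have ft: "finite t" using t cone_def by blast
    show "{i. insert (a t i) t \<in> cone u} \<in> U"
      using succ_U[OF ft]
    proof (rule U_mono)
      fix i assume "succ_ok t (a t i)"
      then have "t \<sqsubseteq> insert (a t i) t" using iseg_succ ft by blast
      then show "insert (a t i) t \<in> cone u" unfolding cone_def using ft t iseg_trans by blast
    qed
  qed
  show "alpha_tree U a (cone u)" "stem (cone u) = u" using mk_AT[OF tr uc cmp sc] by auto
qed

lemma cone_body: "infinite X \<Longrightarrow> u \<sqsubseteq> X \<Longrightarrow> X \<in> body (cone u)"
  unfolding body_iff cone_def using iseg_comp iseg_finite by blast

definition restr :: "nat set set \<Rightarrow> nat set set \<Rightarrow> nat set \<Rightarrow> nat set set" where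
  "restr T1 T2 u = {t \<in> T1 \<inter> T2. t \<sqsubseteq> u \<or> u \<sqsubseteq> t}"

lemma restr_AT:
  assumes T1: "alpha_tree U a T1" and T2: "alpha_tree U a T2" and u1: "u \<in> T1" and u2: "u \<in> T2"
    and s1: "stem T1 \<sqsubseteq> u" and s2: "stem T2 \<sqsubseteq> u"
  shows "alpha_tree U a (restr T1 T2 u)" "stem (restr T1 T2 u) = u"
    "restr T1 T2 u \<subseteq> T1" "restr T1 T2 u \<subseteq> T2"
    "\<And>X. X \<in> body T1 \<Longrightarrow> X \<in> body T2 \<Longrightarrow> u \<sqsubseteq> X \<Longrightarrow> X \<in> body (restr T1 T2 u)"
proof -
  note P1 = AT_props[OF T1] and P2 = AT_props[OF T2]
  have fu: "finite u" using u1 P1(1) tree_finite by blast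
  have uc: "u \<in> restr T1 T2 u" unfolding restr_def using fu iseg_refl u1 u2 by blast
  have tr: "is_tree (restr T1 T2 u)" unfolding is_tree_def
  proof (intro conjI ballI allI impI)
    show "restr T1 T2 u \<noteq> {}" using uc by blast
    show "\<And>t. t \<in> restr T1 T2 u \<Longrightarrow> finite t" unfolding restr_def using P1(1) tree_finite by blast
    fix t s assume t: "t \<in> restr T1 T2 u" and st: "s \<sqsubseteq> t"
    have "s \<sqsubseteq> u \<or> u \<sqsubseteq> s"
    proof (cases "t \<sqsubseteq> u")
      case True then show ?thesis using st iseg_trans by blast
    next
      case False then have "u \<sqsubseteq> t" using t restr_def by blast
      then show ?thesis using st iseg_comp by blast
    qed
    moreover have "s \<in> T1" "s \<in> T2" using t st tree_closed P1(1) P2(1) unfolding restr_def by blast+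
    ultimately show "s \<in> restr T1 T2 u" unfolding restr_def by blast
  qed
  have cmp: "\<And>t. t \<in> restr T1 T2 u \<Longrightarrow> u \<sqsubseteq> t \<or> t \<sqsubseteq> u" unfolding restr_def by blast
  have sc: "\<And>t. t \<in> restr T1 T2 u \<Longrightarrow> u \<sqsubseteq> t \<Longrightarrow> {i. insert (a t i) t \<in> restr T1 T2 u} \<in> U"
  proof -
    fix t assume t: "t \<in> restr T1 T2 u" "u \<sqsubseteq> t"
    have tT: "t \<in> T1" "t \<in> T2" using t restr_def by auto
    have ft: "finite t" using tT P1(1) tree_finite by blast
    have a1: "{i. insert (a t i) t \<in> T1} \<in> U" using P1(5)[OF tT(1)] s1 t(2) iseg_trans by blast
    have a2: "{i. insert (a t i) t \<in> T2} \<in> U" using P2(5)[OF tT(2)] s2 t(2) iseg_trans by blast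
    have "{i. (insert (a t i) t \<in> T1 \<and> insert (a t i) t \<in> T2) \<and> succ_ok t (a t i)} \<in> U"
      using U_conj[OF U_conj[OF a1 a2] succ_U[OF ft]] .
    then show "{i. insert (a t i) t \<in> restr T1 T2 u} \<in> U"
    proof (rule U_mono)
      fix i assume i: "(insert (a t i) t \<in> T1 \<and> insert (a t i) t \<in> T2) \<and> succ_ok t (a t i)"
      then have "t \<sqsubseteq> insert (a t i) t" using iseg_succ ft by blast
      then show "insert (a t i) t \<in> restr T1 T2 u" unfolding restr_def using i t iseg_trans by blast
    qed
  qed
  show "alpha_tree U a (restr T1 T2 u)" "stem (restr T1 T2 u) = u" using mk_AT[OF tr uc cmp sc] by auto
  show "restr T1 T2 u \<subseteq> T1" "restr T1 T2 u \<subseteq> T2" unfolding restr_def by auto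
  fix X assume X: "X \<in> body T1" "X \<in> body T2" "u \<sqsubseteq> X"
  show "X \<in> body (restr T1 T2 u)" unfolding body_iff restr_def using X body_iff iseg_comp by blast
qed

abbreviation E where "E \<equiv> alpha_Ellentuck U a"

lemma open_body: "alpha_tree U a T \<Longrightarrow> openin E (body T)"
  unfolding alpha_Ellentuck_def by (rule topology_generated_by_Basis) blast

lemma topspace_E: "topspace E = {X. infinite X}"
proof -
  have "topspace E = \<Union>{body T | T. alpha_tree U a T}" unfolding alpha_Ellentuck_def by simp
  also have "\<dots> = {X. infinite X}"
  proof
    show "\<Union>{body T | T. alpha_tree U a T} \<subseteq> {X. infinite X}" unfolding body_def by blast
    show "{X. infinite X} \<subseteq> \<Union>{body T | T. alpha_tree U a T}"
    proof
      fix X :: "nat set" assume "X \<in> {X. infinite X}"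
      then have inf: "infinite X" by simp
      obtain q where q: "q \<sqsubseteq> X" using iseg_exists_long[OF inf, of "{}"] by blast
      have "X \<in> body (cone q)" using cone_body inf q by blast
      moreover have "alpha_tree U a (cone q)" using cone_AT(1)[OF iseg_finite[OF q]] .
      ultimately show "X \<in> \<Union>{body T | T. alpha_tree U a T}" by blast
    qed
  qed
  finally show ?thesis .
qed

lemma open_basis:
  assumes "openin E G" "X \<in> G"
  shows "\<exists>T. alpha_tree U a T \<and> X \<in> body T \<and> body T \<subseteq> G"
proof -
  have "generate_topology_on {body T | T. alpha_tree U a T} G"
    using assms(1) unfolding alpha_Ellentuck_def by (rule openin_topology_generated_by)
  then show ?thesis using assms(2)
  proof (induction arbitrary: X)
    case Empty then show ?case by simp
  next
    case (Int G1 G2)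
    obtain T1 where T1: "alpha_tree U a T1" "X \<in> body T1" "body T1 \<subseteq> G1" using Int by blast
    obtain T2 where T2: "alpha_tree U a T2" "X \<in> body T2" "body T2 \<subseteq> G2" using Int by blast
    have s1: "stem T1 \<sqsubseteq> X" using stem_below_body T1 by blast
    have s2: "stem T2 \<sqsubseteq> X" using stem_below_body T2 by blast
    obtain u where u: "u \<sqsubseteq> X" "stem T1 \<sqsubseteq> u" "stem T2 \<sqsubseteq> u"
    proof (cases "stem T1 \<sqsubseteq> stem T2")
      case True
      have "stem T2 \<sqsubseteq> stem T2" using iseg_refl[OF iseg_finite[OF s2]] .
      then show ?thesis using that[OF s2 True] by blast
    next
      case False then have F: "stem T2 \<sqsubseteq> stem T1" using iseg_comp[OF s1 s2] by blast
      have "stem T1 \<sqsubseteq> stem T1" using iseg_refl[OF iseg_finite[OF s1]] .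
      then show ?thesis using that[OF s1 _ F] by blast
    qed
    have uT: "u \<in> T1" "u \<in> T2" using u(1) T1(2) T2(2) unfolding body_iff by blast+
    note R = restr_AT[OF T1(1) T2(1) uT u(2,3)]
    have "X \<in> body (restr T1 T2 u)" using R(5)[OF T1(2) T2(2) u(1)] .
    moreover have "body (restr T1 T2 u) \<subseteq> G1 \<inter> G2" using body_mono[OF R(3)] body_mono[OF R(4)] T1(3) T2(3) by blast
    ultimately show ?case using R(1) by blast
  next
    case (UN K)
    then obtain k where "k \<in> K" "X \<in> k" by blast
    then obtain T where "alpha_tree U a T" "X \<in> body T" "body T \<subseteq> k" using UN by blast
    then show ?case using \<open>k \<in> K\<close> by blast
  next
    case (Basis s)
    then show ?case by blast
  qed
qed

end


lemma common_ext:
  assumes "p \<sqsubseteq> X" "q \<sqsubseteq> X"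
  obtains u where "u \<sqsubseteq> X" "p \<sqsubseteq> u" "q \<sqsubseteq> u"
proof (cases "p \<sqsubseteq> q")
  case True
  have "q \<sqsubseteq> q" using iseg_refl[OF iseg_finite[OF assms(2)]] .
  then show ?thesis using that[OF assms(2) True] by blast
next
  case False then have F: "q \<sqsubseteq> p" using iseg_comp[OF assms] by blast
  have "p \<sqsubseteq> p" using iseg_refl[OF iseg_finite[OF assms(1)]] .
  then show ?thesis using that[OF assms(1) _ F] by blast
qed

context AM begin

lemma open_ramsey:
  assumes T: "alpha_tree U a T" and Op: "openin E Op"
  shows "\<exists>S. alpha_tree U a S \<and> S \<subseteq> T \<and> stem S = stem T \<and> (body S \<subseteq> Op \<or> body S \<inter> Op = {})"
proof -
  note P = AT_props[OF T]
  define s where "s = stem T"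
  define good where "good = (\<lambda>t. \<exists>R. alpha_tree U a R \<and> R \<subseteq> T \<and> stem R = t \<and> body R \<subseteq> Op)"
  show ?thesis
  proof (cases "good s")
    case True then show ?thesis unfolding good_def s_def by blast
  next
    case False
    have K: "\<And>t. t \<in> T \<Longrightarrow> s \<sqsubseteq> t \<Longrightarrow> \<not> good t \<Longrightarrow> {i. insert (a t i) t \<in> T \<and> \<not> good (insert (a t i) t)} \<in> U"
    proof (rule ccontr)
      fix t assume tT: "t \<in> T" and st: "s \<sqsubseteq> t" and ng: "\<not> good t"
        and nU: "{i. insert (a t i) t \<in> T \<and> \<not> good (insert (a t i) t)} \<notin> U"
      have ft: "finite t" using tree_finite[OF P(1) tT] .
      have C: "{i. \<not> (insert (a t i) t \<in> T \<and> \<not> good (insert (a t i) t))} \<in> U"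
      proof -
        have "- {i. insert (a t i) t \<in> T \<and> \<not> good (insert (a t i) t)} = {i. \<not> (insert (a t i) t \<in> T \<and> \<not> good (insert (a t i) t))}" by blast
        then show ?thesis using U_compl[OF nU] by simp
      qed
      have suc: "{i. insert (a t i) t \<in> T} \<in> U" using P(5)[OF tT] st s_def by blast
      have "{i. (\<not> (insert (a t i) t \<in> T \<and> \<not> good (insert (a t i) t)) \<and> insert (a t i) t \<in> T) \<and> succ_ok t (a t i)} \<in> U"
        by (rule U_conj[OF U_conj[OF C suc] succ_U[OF ft]])
      then have A': "{i. insert (a t i) t \<in> T \<and> good (insert (a t i) t) \<and> succ_ok t (a t i)} \<in> U"
        by (rule U_mono) blast
      define GN where "GN = {n. insert n t \<in> T \<and> good (insert n t) \<and> succ_ok t n}"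
      define R where "R = (\<lambda>n. SOME R. alpha_tree U a R \<and> R \<subseteq> T \<and> stem R = insert n t \<and> body R \<subseteq> Op)"
      have RP: "\<And>n. n \<in> GN \<Longrightarrow> alpha_tree U a (R n) \<and> R n \<subseteq> T \<and> stem (R n) = insert n t \<and> body (R n) \<subseteq> Op"
      proof -
        fix n assume "n \<in> GN"
        then have "\<exists>R. alpha_tree U a R \<and> R \<subseteq> T \<and> stem R = insert n t \<and> body R \<subseteq> Op"
          unfolding GN_def good_def by blast
        then show "alpha_tree U a (R n) \<and> R n \<subseteq> T \<and> stem (R n) = insert n t \<and> body (R n) \<subseteq> Op"
          unfolding R_def by (rule someI_ex)
      qed
      have GNs: "\<And>n. n \<in> GN \<Longrightarrow> succ_ok t n" unfolding GN_def by blast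
      have tsucc: "\<And>n. n \<in> GN \<Longrightarrow> t \<sqsubseteq> insert n t" using iseg_succ[OF ft] GNs by blast
      have stemin: "\<And>n. n \<in> GN \<Longrightarrow> insert n t \<in> R n"
        using RP AT_props(2) by metis
      define S' where "S' = (\<Union>n\<in>GN. R n)"
      obtain i0 where "i0 \<in> {i. insert (a t i) t \<in> T \<and> good (insert (a t i) t) \<and> succ_ok t (a t i)}"
        using U_ne[OF A'] by blast
      then have n0: "a t i0 \<in> GN" unfolding GN_def by simp
      have tS: "t \<in> S'"
      proof -
        have "t \<in> R (a t i0)"
          using tree_closed[OF AT_props(1)[OF conjunct1[OF RP[OF n0]]] stemin[OF n0] tsucc[OF n0]] .
        then show ?thesis unfolding S'_def using n0 by blast
      qed
      have tr: "is_tree S'" unfolding is_tree_def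
      proof (intro conjI ballI allI impI)
        show "S' \<noteq> {}" using tS by blast
        fix r assume "r \<in> S'"
        then obtain n where n: "n \<in> GN" "r \<in> R n" unfolding S'_def by blast
        have trn: "is_tree (R n)" using AT_props(1) RP[OF n(1)] by blast
        show "finite r" using tree_finite[OF trn n(2)] .
        fix q assume "q \<sqsubseteq> r"
        then have "q \<in> R n" using tree_closed[OF trn n(2)] by blast
        then show "q \<in> S'" unfolding S'_def using n(1) by blast
      qed
      have cmp: "\<And>r. r \<in> S' \<Longrightarrow> t \<sqsubseteq> r \<or> r \<sqsubseteq> t"
      proof -
        fix r assume "r \<in> S'"
        then obtain n where n: "n \<in> GN" "r \<in> R n" unfolding S'_def by blast
        have rp: "alpha_tree U a (R n)" "stem (R n) = insert n t" using RP[OF n(1)] by auto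
        have "insert n t \<sqsubseteq> r \<or> r \<sqsubseteq> insert n t" using AT_props(4)[OF rp(1) n(2)] rp(2) by simp
        then show "t \<sqsubseteq> r \<or> r \<sqsubseteq> t"
        proof
          assume "insert n t \<sqsubseteq> r" then show ?thesis using iseg_trans[OF tsucc[OF n(1)]] by blast
        next
          assume "r \<sqsubseteq> insert n t"
          then have "r \<sqsubseteq> t \<or> r = insert n t" using iseg_below_succ[OF _ ft GNs[OF n(1)]] by blast
          then show ?thesis using tsucc[OF n(1)] by blast
        qed
      qed
      have sc: "\<And>r. r \<in> S' \<Longrightarrow> t \<sqsubseteq> r \<Longrightarrow> {i. insert (a r i) r \<in> S'} \<in> U"
      proof -
        fix r assume rS: "r \<in> S'" and tr': "t \<sqsubseteq> r"
        show "{i. insert (a r i) r \<in> S'} \<in> U"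
        proof (cases "r = t")
          case True
          show ?thesis using A'
          proof (rule U_mono)
            fix i assume "insert (a t i) t \<in> T \<and> good (insert (a t i) t) \<and> succ_ok t (a t i)"
            then have "a t i \<in> GN" unfolding GN_def by simp
            then show "insert (a r i) r \<in> S'" using stemin True unfolding S'_def by blast
          qed
        next
          case False
          from rS obtain n where n: "n \<in> GN" "r \<in> R n" unfolding S'_def by blast
          have rp: "alpha_tree U a (R n)" "stem (R n) = insert n t" using RP[OF n(1)] by auto
          have "stem (R n) \<sqsubseteq> r"
          proof -
            have "insert n t \<sqsubseteq> r \<or> r \<sqsubseteq> insert n t" using AT_props(4)[OF rp(1) n(2)] rp(2) by simp
            moreover have "r \<sqsubseteq> insert n t \<Longrightarrow> r = insert n t"
            proof -
              assume "r \<sqsubseteq> insert n t"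
              then have "r \<sqsubseteq> t \<or> r = insert n t" using iseg_below_succ[OF _ ft GNs[OF n(1)]] by blast
              then show ?thesis using tr' False iseg_antisym by blast
            qed
            ultimately show ?thesis using rp(2) iseg_refl[OF iseg_finite[OF tsucc[OF n(1)]]] by auto
          qed
          then have "{i. insert (a r i) r \<in> R n} \<in> U" using AT_props(5)[OF rp(1) n(2)] by blast
          then show ?thesis by (rule U_mono) (use n(1) S'_def in blast)
        qed
      qed
      have S'AT: "alpha_tree U a S'" and S'st: "stem S' = t" using mk_AT[OF tr tS cmp sc] by auto
      have S'T: "S' \<subseteq> T" unfolding S'_def using RP by blast
      have "body S' \<subseteq> Op"
      proof
        fix X assume XS: "X \<in> body S'"
        have infX: "infinite X" using XS body_iff by blast
        have tX: "t \<sqsubseteq> X" using stem_below_body[OF S'AT XS] S'st by simp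
        obtain m where m: "m \<in> X" "m \<notin> t" "succ_ok t m" "insert m t \<sqsubseteq> X"
          using iseg_next[OF infX tX] by blast
        have claim: "\<And>j r. j \<in> GN \<Longrightarrow> r \<in> R j \<Longrightarrow> insert m t \<sqsubseteq> r \<Longrightarrow> j = m"
        proof -
          fix j r assume j: "j \<in> GN" "r \<in> R j" and mr: "insert m t \<sqsubseteq> r"
          have rp: "alpha_tree U a (R j)" "stem (R j) = insert j t" using RP[OF j(1)] by auto
          have jt: "j \<notin> t" using GNs[OF j(1)] unfolding succ_ok_def by blast
          have "insert j t \<sqsubseteq> r \<or> r \<sqsubseteq> insert j t" using AT_props(4)[OF rp(1) j(2)] rp(2) by simp
          then show "j = m"
          proof
            assume "r \<sqsubseteq> insert j t"
            then have "insert m t \<subseteq> insert j t" using iseg_subset mr by blast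
            then show ?thesis using m(2) by blast
          next
            assume "insert j t \<sqsubseteq> r"
            then have "insert j t \<sqsubseteq> insert m t \<or> insert m t \<sqsubseteq> insert j t" using iseg_comp mr by blast
            then have "insert j t \<subseteq> insert m t \<or> insert m t \<subseteq> insert j t" using iseg_subset by blast
            then show ?thesis using m(2) jt by blast
          qed
        qed
        have "insert m t \<in> S'" using XS m(4) body_iff by blast
        then obtain n where n: "n \<in> GN" "insert m t \<in> R n" unfolding S'_def by blast
        have "insert m t \<sqsubseteq> insert m t" using iseg_refl iseg_finite[OF m(4)] by blast
        then have "n = m" using claim[OF n] by blast
        then have mG: "m \<in> GN" and mR: "insert m t \<in> R m" using n by auto
        have trm: "is_tree (R m)" using AT_props(1) RP[OF mG] by blast
        have "X \<in> body (R m)" unfolding body_iff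
        proof (intro conjI allI impI)
          show "infinite X" by (rule infX)
          fix q assume q: "q \<sqsubseteq> X"
          have qS: "q \<in> S'" using XS q body_iff by blast
          then obtain j where j: "j \<in> GN" "q \<in> R j" unfolding S'_def by blast
          have "q \<sqsubseteq> insert m t \<or> insert m t \<sqsubseteq> q" using iseg_comp[OF q m(4)] .
          then show "q \<in> R m"
          proof
            assume "q \<sqsubseteq> insert m t" then show ?thesis using tree_closed[OF trm mR] by blast
          next
            assume "insert m t \<sqsubseteq> q" then have "j = m" using claim[OF j] by blast
            then show ?thesis using j by simp
          qed
        qed
        then show "X \<in> Op" using RP[OF mG] by blast
      qed
      then have "good t" unfolding good_def using S'AT S'T S'st by blast
      then show False using ng by blast
    qed
    define B where "B = {r \<in> T. r \<sqsubseteq> s} \<union> {r \<in> T. s \<sqsubseteq> r \<and> (\<forall>q. s \<sqsubseteq> q \<longrightarrow> q \<sqsubseteq> r \<longrightarrow> \<not> good q)}"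
    have fs: "finite s" using P(3) s_def by simp
    have ss: "s \<sqsubseteq> s" using iseg_refl[OF fs] .
    have sT: "s \<in> T" using P(2) s_def by simp
    have B2: "\<And>r. r \<in> B \<Longrightarrow> s \<sqsubseteq> r \<Longrightarrow> r \<in> T \<and> (\<forall>q. s \<sqsubseteq> q \<longrightarrow> q \<sqsubseteq> r \<longrightarrow> \<not> good q)"
    proof -
      fix r assume rB: "r \<in> B" and sr: "s \<sqsubseteq> r"
      show "r \<in> T \<and> (\<forall>q. s \<sqsubseteq> q \<longrightarrow> q \<sqsubseteq> r \<longrightarrow> \<not> good q)"
      proof (cases "r \<sqsubseteq> s")
        case True
        then have "r = s" using sr iseg_antisym by blast
        moreover have "\<forall>q. s \<sqsubseteq> q \<longrightarrow> q \<sqsubseteq> s \<longrightarrow> \<not> good q" using False iseg_antisym by blast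
        ultimately show ?thesis using sT by simp
      next
        case False then show ?thesis using rB B_def by blast
      qed
    qed
    have sB: "s \<in> B" unfolding B_def using sT ss by blast
    have trB: "is_tree B" unfolding is_tree_def
    proof (intro conjI ballI allI impI)
      show "B \<noteq> {}" using sB by blast
      fix r assume rB: "r \<in> B"
      then have rT: "r \<in> T" unfolding B_def by blast
      show "finite r" using tree_finite[OF P(1) rT] .
      fix r' assume r'r: "r' \<sqsubseteq> r"
      have r'T: "r' \<in> T" using tree_closed[OF P(1) rT r'r] .
      show "r' \<in> B"
      proof (cases "r \<sqsubseteq> s")
        case True then show ?thesis unfolding B_def using r'T iseg_trans[OF r'r] by blast
      next
        case False
        then have sr: "s \<sqsubseteq> r" using rB B_def by blast
        have "r' \<sqsubseteq> s \<or> s \<sqsubseteq> r'" using iseg_comp[OF r'r sr] .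
        then show ?thesis
        proof
          assume "r' \<sqsubseteq> s" then show ?thesis unfolding B_def using r'T by blast
        next
          assume sr': "s \<sqsubseteq> r'"
          have "\<forall>q. s \<sqsubseteq> q \<longrightarrow> q \<sqsubseteq> r' \<longrightarrow> \<not> good q"
            using B2[OF rB sr] iseg_trans[OF _ r'r] by blast
          then show ?thesis unfolding B_def using r'T sr' by blast
        qed
      qed
    qed
    have cmpB: "\<And>r. r \<in> B \<Longrightarrow> s \<sqsubseteq> r \<or> r \<sqsubseteq> s" unfolding B_def by blast
    have scB: "\<And>r. r \<in> B \<Longrightarrow> s \<sqsubseteq> r \<Longrightarrow> {i. insert (a r i) r \<in> B} \<in> U"
    proof -
      fix r assume rB: "r \<in> B" and sr: "s \<sqsubseteq> r"
      have b2: "r \<in> T" "\<forall>q. s \<sqsubseteq> q \<longrightarrow> q \<sqsubseteq> r \<longrightarrow> \<not> good q" using B2[OF rB sr] by auto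
      have fr: "finite r" using tree_finite[OF P(1) b2(1)] .
      have ngr: "\<not> good r" using b2(2) sr iseg_refl[OF fr] by blast
      have "{i. (insert (a r i) r \<in> T \<and> \<not> good (insert (a r i) r)) \<and> succ_ok r (a r i)} \<in> U"
        using U_conj[OF K[OF b2(1) sr ngr] succ_U[OF fr]] .
      then show "{i. insert (a r i) r \<in> B} \<in> U"
      proof (rule U_mono)
        fix i assume i: "(insert (a r i) r \<in> T \<and> \<not> good (insert (a r i) r)) \<and> succ_ok r (a r i)"
        have rr: "r \<sqsubseteq> insert (a r i) r" using iseg_succ[OF fr] i by blast
        have "\<forall>q. s \<sqsubseteq> q \<longrightarrow> q \<sqsubseteq> insert (a r i) r \<longrightarrow> \<not> good q"
        proof (intro allI impI)
          fix q assume "s \<sqsubseteq> q" "q \<sqsubseteq> insert (a r i) r"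
          then have "q \<sqsubseteq> r \<or> q = insert (a r i) r" using iseg_below_succ[OF _ fr] i by blast
          then show "\<not> good q" using b2(2) \<open>s \<sqsubseteq> q\<close> i by blast
        qed
        then show "insert (a r i) r \<in> B" unfolding B_def using i iseg_trans[OF sr rr] by blast
      qed
    qed
    have BAT: "alpha_tree U a B" and Bst: "stem B = s" using mk_AT[OF trB sB cmpB scB] by auto
    have BT: "B \<subseteq> T" unfolding B_def by blast
    have "body B \<inter> Op = {}"
    proof (rule ccontr)
      assume "body B \<inter> Op \<noteq> {}"
      then obtain X where XB: "X \<in> body B" and XO: "X \<in> Op" by blast
      obtain R where R: "alpha_tree U a R" "X \<in> body R" "body R \<subseteq> Op" using open_basis[OF Op XO] by blast
      have sX: "s \<sqsubseteq> X" using stem_below_body[OF BAT XB] Bst by simp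
      have rX: "stem R \<sqsubseteq> X" using stem_below_body[OF R(1,2)] .
      obtain u where u: "u \<sqsubseteq> X" "stem R \<sqsubseteq> u" "s \<sqsubseteq> u" using common_ext[OF rX sX] by blast
      have uB: "u \<in> B" using XB u(1) body_iff by blast
      have uR: "u \<in> R" using R(2) u(1) body_iff by blast
      have uT: "u \<in> T" using uB BT by blast
      note Q = restr_AT[OF R(1) T uR uT u(2)]
      have "stem T \<sqsubseteq> u" using u(3) s_def by simp
      note Q = Q[OF this]
      have "body (restr R T u) \<subseteq> Op" using body_mono[OF Q(3)] R(3) by blast
      then have "good u" unfolding good_def using Q(1,2,4) by blast
      moreover have "\<not> good u" using B2[OF uB u(3)] u(3) iseg_refl[OF iseg_finite[OF u(1)]] by blast
      ultimately show False by blast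
    qed
    then show ?thesis using BAT BT Bst s_def by blast
  qed
qed

end


context AM begin

lemma meager_null:
  assumes M: "meager_in E M"
  shows "alpha_Ramsey_null U a M"
  unfolding alpha_Ramsey_null_def
proof (intro allI impI)
  fix T assume T: "alpha_tree U a T"
  note P = AT_props[OF T]
  have "\<exists>N :: nat \<Rightarrow> nat set set. (\<forall>n. nowhere_dense_in E (N n)) \<and> M \<subseteq> (\<Union>n. N n)"
    using M unfolding meager_in_def by (rule conjunct2)
  then obtain N :: "nat \<Rightarrow> nat set set" where N0: "\<forall>n. nowhere_dense_in E (N n)" and MN: "M \<subseteq> (\<Union>n. N n)"
    by blast
  have N: "\<And>n. nowhere_dense_in E (N n)" using N0 by blast
  define Op where "Op = (\<lambda>n. topspace E - E closure_of (N n))"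
  have Oopen: "\<And>n. openin E (Op n)" unfolding Op_def by (intro openin_diff openin_topspace closedin_closure_of)
  have Odense: "\<And>R n. alpha_tree U a R \<Longrightarrow> body R \<inter> Op n \<noteq> {}"
  proof
    fix R n assume R: "alpha_tree U a R" and e: "body R \<inter> Op n = {}"
    have "body R \<subseteq> topspace E" using openin_subset[OF open_body[OF R]] .
    then have "body R \<subseteq> E closure_of (N n)" using e unfolding Op_def by blast
    then have "body R \<subseteq> E interior_of (E closure_of (N n))" using interior_of_maximal[OF _ open_body[OF R]] by blast
    then have "body R = {}" using N[of n] unfolding nowhere_dense_in_def by blast
    then show False using body_nonempty[OF R] by blast
  qed
  have dense: "\<And>R n. alpha_tree U a R \<Longrightarrow> \<exists>S. alpha_tree U a S \<and> S \<subseteq> R \<and> stem S = stem R \<and> body S \<subseteq> Op n"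
  proof -
    fix R n assume R: "alpha_tree U a R"
    obtain S where S: "alpha_tree U a S" "S \<subseteq> R" "stem S = stem R" "body S \<subseteq> Op n \<or> body S \<inter> Op n = {}"
      using open_ramsey[OF R Oopen[of n]] by blast
    then show "\<exists>S. alpha_tree U a S \<and> S \<subseteq> R \<and> stem S = stem R \<and> body S \<subseteq> Op n" using Odense[OF S(1)] by blast
  qed
  define s where "s = stem T"
  have fs: "finite s" using P(3) s_def by simp
  have ss: "s \<sqsubseteq> s" using iseg_refl[OF fs] .
  have sT: "s \<in> T" using P(2) s_def by simp
  define R where "R = (\<lambda>u k. SOME R. alpha_tree U a R \<and> R \<subseteq> T \<and> stem R = u \<and> body R \<subseteq> Op k)"
  have RP: "\<And>u k. u \<in> T \<Longrightarrow> s \<sqsubseteq> u \<Longrightarrow> alpha_tree U a (R u k) \<and> R u k \<subseteq> T \<and> stem (R u k) = u \<and> body (R u k) \<subseteq> Op k"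
  proof -
    fix u k assume uT: "u \<in> T" and su: "s \<sqsubseteq> u"
    have fu: "finite u" using tree_finite[OF P(1) uT] .
    note Q = restr_AT[OF T T uT uT]
    have "stem T \<sqsubseteq> u" using su s_def by simp
    note Q = Q[OF this this]
    obtain S where S: "alpha_tree U a S" "S \<subseteq> restr T T u" "stem S = u" "body S \<subseteq> Op k"
      using dense[OF Q(1), of k] Q(2) by auto
    have "\<exists>R. alpha_tree U a R \<and> R \<subseteq> T \<and> stem R = u \<and> body R \<subseteq> Op k" using S Q(3) by blast
    then show "alpha_tree U a (R u k) \<and> R u k \<subseteq> T \<and> stem (R u k) = u \<and> body (R u k) \<subseteq> Op k"
      unfolding R_def by (rule someI_ex)
  qed
  have Rstem: "\<And>u k. u \<in> T \<Longrightarrow> s \<sqsubseteq> u \<Longrightarrow> u \<in> R u k"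
  proof -
    fix u k assume "u \<in> T" "s \<sqsubseteq> u"
    then have "alpha_tree U a (R u k)" "stem (R u k) = u" using RP by auto
    then show "u \<in> R u k" using AT_props(2) by metis
  qed
  define S where "S = {r \<in> T. r \<sqsubseteq> s} \<union> {r \<in> T. s \<sqsubseteq> r \<and> (\<forall>q k. s \<sqsubseteq> q \<longrightarrow> q \<sqsubseteq> r \<longrightarrow> q \<noteq> r \<longrightarrow> k \<le> card q \<longrightarrow> r \<in> R q k)}"
  have S2: "\<And>r. r \<in> S \<Longrightarrow> s \<sqsubseteq> r \<Longrightarrow> r \<in> T \<and> (\<forall>q k. s \<sqsubseteq> q \<longrightarrow> q \<sqsubseteq> r \<longrightarrow> q \<noteq> r \<longrightarrow> k \<le> card q \<longrightarrow> r \<in> R q k)"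
  proof -
    fix r assume rS: "r \<in> S" and sr: "s \<sqsubseteq> r"
    show "r \<in> T \<and> (\<forall>q k. s \<sqsubseteq> q \<longrightarrow> q \<sqsubseteq> r \<longrightarrow> q \<noteq> r \<longrightarrow> k \<le> card q \<longrightarrow> r \<in> R q k)"
    proof (cases "r \<sqsubseteq> s")
      case True
      then have rs: "r = s" using sr iseg_antisym by blast
      have "\<forall>q k. s \<sqsubseteq> q \<longrightarrow> q \<sqsubseteq> r \<longrightarrow> q \<noteq> r \<longrightarrow> k \<le> card q \<longrightarrow> r \<in> R q k"
      proof (intro allI impI)
        fix q k assume "s \<sqsubseteq> q" "q \<sqsubseteq> r" "q \<noteq> r"
        then show "k \<le> card q \<Longrightarrow> r \<in> R q k" using rs iseg_antisym[of q s] by simp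
      qed
      then show ?thesis using sT rs by simp
    next
      case False then show ?thesis using rS S_def by blast
    qed
  qed
  have S3: "\<And>r q k. r \<in> S \<Longrightarrow> s \<sqsubseteq> q \<Longrightarrow> q \<sqsubseteq> r \<Longrightarrow> k \<le> card q \<Longrightarrow> r \<in> R q k"
  proof -
    fix r q k assume rS: "r \<in> S" and sq: "s \<sqsubseteq> q" and qr: "q \<sqsubseteq> r" and k: "k \<le> card q"
    have s2: "r \<in> T" "\<forall>q k. s \<sqsubseteq> q \<longrightarrow> q \<sqsubseteq> r \<longrightarrow> q \<noteq> r \<longrightarrow> k \<le> card q \<longrightarrow> r \<in> R q k"
      using S2[OF rS iseg_trans[OF sq qr]] by auto
    show "r \<in> R q k"
    proof (cases "q = r")
      case True then show ?thesis using Rstem s2(1) sq by blast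
    next
      case False then show ?thesis using s2(2) sq qr k by blast
    qed
  qed
  have sS: "s \<in> S" unfolding S_def using sT ss by blast
  have trS: "is_tree S" unfolding is_tree_def
  proof (intro conjI ballI allI impI)
    show "S \<noteq> {}" using sS by blast
    fix r assume rS: "r \<in> S"
    then have rT: "r \<in> T" unfolding S_def by blast
    show "finite r" using tree_finite[OF P(1) rT] .
    fix r' assume r'r: "r' \<sqsubseteq> r"
    have r'T: "r' \<in> T" using tree_closed[OF P(1) rT r'r] .
    show "r' \<in> S"
    proof (cases "r \<sqsubseteq> s")
      case True then show ?thesis unfolding S_def using r'T iseg_trans[OF r'r] by blast
    next
      case False
      then have sr: "s \<sqsubseteq> r" using rS S_def by blast
      have "r' \<sqsubseteq> s \<or> s \<sqsubseteq> r'" using iseg_comp[OF r'r sr] .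
      then show ?thesis
      proof
        assume "r' \<sqsubseteq> s" then show ?thesis unfolding S_def using r'T by blast
      next
        assume sr': "s \<sqsubseteq> r'"
        have "\<forall>q k. s \<sqsubseteq> q \<longrightarrow> q \<sqsubseteq> r' \<longrightarrow> q \<noteq> r' \<longrightarrow> k \<le> card q \<longrightarrow> r' \<in> R q k"
        proof (intro allI impI)
          fix q k assume sq: "s \<sqsubseteq> q" and qr': "q \<sqsubseteq> r'" and ne: "q \<noteq> r'" and k: "k \<le> card q"
          have qr: "q \<sqsubseteq> r" using iseg_trans[OF qr' r'r] .
          have "r \<in> R q k" using S3[OF rS sq qr k] .
          moreover have "is_tree (R q k)" using RP[OF tree_closed[OF P(1) rT qr] sq] AT_props(1) by blast
          ultimately show "r' \<in> R q k" using tree_closed[OF _ _ r'r] by blast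
        qed
        then show ?thesis unfolding S_def using r'T sr' by blast
      qed
    qed
  qed
  have cmpS: "\<And>r. r \<in> S \<Longrightarrow> s \<sqsubseteq> r \<or> r \<sqsubseteq> s" unfolding S_def by blast
  have scS: "\<And>r. r \<in> S \<Longrightarrow> s \<sqsubseteq> r \<Longrightarrow> {i. insert (a r i) r \<in> S} \<in> U"
  proof -
    fix r assume rS: "r \<in> S" and sr: "s \<sqsubseteq> r"
    have rT: "r \<in> T" using S2[OF rS sr] by blast
    have fr: "finite r" using tree_finite[OF P(1) rT] .
    define F where "F = Pow r \<times> {..card r}"
    have fF: "finite F" unfolding F_def using fr by simp
    define PP where "PP = (\<lambda>(x :: nat set \<times> nat) i. s \<sqsubseteq> fst x \<and> fst x \<sqsubseteq> r \<and> snd x \<le> card (fst x) \<longrightarrow> insert (a r i) r \<in> R (fst x) (snd x))"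
    have "\<And>x. x \<in> F \<Longrightarrow> {i. PP x i} \<in> U"
    proof -
      fix x assume "x \<in> F"
      show "{i. PP x i} \<in> U"
      proof (cases "s \<sqsubseteq> fst x \<and> fst x \<sqsubseteq> r \<and> snd x \<le> card (fst x)")
        case True
        have qT: "fst x \<in> T" using tree_closed[OF P(1) rT] True by simp
        have rp: "alpha_tree U a (R (fst x) (snd x))" "stem (R (fst x) (snd x)) = fst x" using RP[OF qT] True by auto
        have "r \<in> R (fst x) (snd x)" using S3[OF rS] True by blast
        moreover have "stem (R (fst x) (snd x)) \<sqsubseteq> r" using rp(2) True by simp
        ultimately have "{i. insert (a r i) r \<in> R (fst x) (snd x)} \<in> U" by (rule AT_props(5)[OF rp(1)])
        then show ?thesis by (rule U_mono) (simp add: PP_def case_prod_unfold)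
      next
        case False
        have "{i. PP x i} = UNIV" using False unfolding PP_def by auto
        then show ?thesis using U_UNIV by simp
      qed
    qed
    then have all: "{i. \<forall>x\<in>F. PP x i} \<in> U" using U_fin_all[OF fF] by blast
    have "stem T \<sqsubseteq> r" using sr s_def by simp
    have "{i. ((\<forall>x\<in>F. PP x i) \<and> insert (a r i) r \<in> T) \<and> succ_ok r (a r i)} \<in> U"
      using U_conj[OF U_conj[OF all P(5)[OF rT \<open>stem T \<sqsubseteq> r\<close>]] succ_U[OF fr]] .
    then show "{i. insert (a r i) r \<in> S} \<in> U"
    proof (rule U_mono)
      fix i assume i: "((\<forall>x\<in>F. PP x i) \<and> insert (a r i) r \<in> T) \<and> succ_ok r (a r i)"
      have rr: "r \<sqsubseteq> insert (a r i) r" using iseg_succ[OF fr] i by blast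
      have "\<forall>q k. s \<sqsubseteq> q \<longrightarrow> q \<sqsubseteq> insert (a r i) r \<longrightarrow> q \<noteq> insert (a r i) r \<longrightarrow> k \<le> card q \<longrightarrow> insert (a r i) r \<in> R q k"
      proof (intro allI impI)
        fix q k assume sq: "s \<sqsubseteq> q" and qi: "q \<sqsubseteq> insert (a r i) r" and ne: "q \<noteq> insert (a r i) r" and k: "k \<le> card q"
        have qr: "q \<sqsubseteq> r" using iseg_below_succ[OF qi fr] i ne by blast
        have "q \<subseteq> r" using iseg_subset[OF qr] .
        then have "card q \<le> card r" using card_mono[OF fr] by blast
        then have "(q, k) \<in> F" unfolding F_def using \<open>q \<subseteq> r\<close> k by simp
        then have "PP (q, k) i" using i by blast
        then show "insert (a r i) r \<in> R q k" unfolding PP_def using sq qr k by simp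
      qed
      then show "insert (a r i) r \<in> S" unfolding S_def using i iseg_trans[OF sr rr] by blast
    qed
  qed
  have SAT: "alpha_tree U a S" and Sst: "stem S = s" using mk_AT[OF trS sS cmpS scS] by auto
  have ST: "S \<subseteq> T" unfolding S_def by blast
  have "body S \<inter> M = {}"
  proof (rule ccontr)
    assume "body S \<inter> M \<noteq> {}"
    then obtain X where XS: "X \<in> body S" and XM: "X \<in> M" by blast
    obtain n where Xn: "X \<in> N n" using XM MN by blast
    have infX: "infinite X" using XS body_iff by blast
    have sX: "s \<sqsubseteq> X" using stem_below_body[OF SAT XS] Sst by simp
    obtain A where A: "finite A" "card A = n" "A \<subseteq> X" using infinite_arbitrarily_large[OF infX] by blast
    have "finite (A \<union> s)" "A \<union> s \<subseteq> X" using A fs iseg_subset[OF sX] by auto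
    then obtain q where q: "q \<sqsubseteq> X" "A \<union> s \<subseteq> q" using iseg_exists_long[OF infX] by blast
    have fq: "finite q" using iseg_finite[OF q(1)] .
    have sq: "s \<sqsubseteq> q"
    proof -
      have "s \<sqsubseteq> q \<or> q \<sqsubseteq> s" using iseg_comp[OF sX q(1)] .
      moreover have "q \<sqsubseteq> s \<Longrightarrow> q = s" using iseg_subset q(2) by blast
      ultimately show ?thesis using ss by blast
    qed
    have "A \<subseteq> q" using q(2) by simp
    then have nq: "n \<le> card q" using card_mono[OF fq, of A] A(2) by simp
    have qS: "q \<in> S" using XS q(1) body_iff by blast
    have qT: "q \<in> T" using qS ST by blast
    have rp: "alpha_tree U a (R q n)" "body (R q n) \<subseteq> Op n" using RP[OF qT sq] by auto
    have trq: "is_tree (R q n)" using AT_props(1)[OF rp(1)] .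
    have qR: "q \<in> R q n" using Rstem[OF qT sq] .
    have "X \<in> body (R q n)" unfolding body_iff
    proof (intro conjI allI impI)
      show "infinite X" by (rule infX)
      fix r assume r: "r \<sqsubseteq> X"
      have "r \<sqsubseteq> q \<or> q \<sqsubseteq> r" using iseg_comp[OF r q(1)] .
      then show "r \<in> R q n"
      proof
        assume "r \<sqsubseteq> q" then show ?thesis using tree_closed[OF trq qR] by blast
      next
        assume qr: "q \<sqsubseteq> r"
        have "r \<in> S" using XS r body_iff by blast
        then show ?thesis using S3[OF _ sq qr nq] by blast
      qed
    qed
    then have "X \<in> Op n" using rp(2) by blast
    then have "X \<notin> E closure_of (N n)" unfolding Op_def by blast
    moreover have "N n \<subseteq> topspace E" using N[of n] unfolding nowhere_dense_in_def by blast
    ultimately show False using closure_of_subset[of "N n" E] Xn by blast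
  qed
  then show "\<exists>S. alpha_tree U a S \<and> S \<subseteq> T \<and> stem S = stem T \<and> body S \<inter> M = {}"
    using SAT ST Sst s_def by blast
qed

lemma null_meager:
  assumes M: "alpha_Ramsey_null U a M" and sub: "M \<subseteq> topspace E"
  shows "meager_in E M"
proof -
  have "E interior_of (E closure_of M) = {}"
  proof (rule ccontr)
    assume "E interior_of (E closure_of M) \<noteq> {}"
    then obtain Y where Y: "Y \<in> E interior_of (E closure_of M)" by blast
    obtain T where T: "alpha_tree U a T" "Y \<in> body T" "body T \<subseteq> E interior_of (E closure_of M)"
      using open_basis[OF openin_interior_of Y] by auto
    obtain S where S: "alpha_tree U a S" "S \<subseteq> T" "stem S = stem T" "body S \<inter> M = {}"
      using M[unfolded alpha_Ramsey_null_def, rule_format, OF T(1)] by blast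
    have "body S \<inter> E closure_of M = {}" using openin_Int_closure_of_eq_empty[OF open_body[OF S(1)]] S(4) by simp
    moreover have "body S \<subseteq> E closure_of M" using body_mono[OF S(2)] T(3) interior_of_subset[of E "E closure_of M"] by blast
    ultimately have "body S = {}" by blast
    then show False using body_nonempty[OF S(1)] by blast
  qed
  then have "nowhere_dense_in E M" unfolding nowhere_dense_in_def using sub by blast
  then show ?thesis unfolding meager_in_def using sub by (intro conjI exI[of _ "\<lambda>n. M"]) auto
qed

lemma main_AM:
  assumes sub: "XX \<subseteq> {X. infinite X}"
  shows "(alpha_Ramsey U a XX \<longleftrightarrow> Baire_property_in E XX) \<and> (alpha_Ramsey_null U a XX \<longleftrightarrow> meager_in E XX)"
proof -
  have subT: "XX \<subseteq> topspace E" using sub topspace_E by simp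
  have null_union: "\<And>A B. alpha_Ramsey_null U a A \<Longrightarrow> alpha_Ramsey_null U a B \<Longrightarrow> alpha_Ramsey_null U a (A \<union> B)"
    unfolding alpha_Ramsey_null_def
  proof (intro allI impI)
    fix A B T
    assume A: "\<forall>T. alpha_tree U a T \<longrightarrow> (\<exists>S. alpha_tree U a S \<and> S \<subseteq> T \<and> stem S = stem T \<and> body S \<inter> A = {})"
      and B: "\<forall>T. alpha_tree U a T \<longrightarrow> (\<exists>S. alpha_tree U a S \<and> S \<subseteq> T \<and> stem S = stem T \<and> body S \<inter> B = {})"
      and T: "alpha_tree U a T"
    obtain S1 where S1: "alpha_tree U a S1" "S1 \<subseteq> T" "stem S1 = stem T" "body S1 \<inter> A = {}" using A[rule_format, OF T] by blast
    obtain S2 where S2: "alpha_tree U a S2" "S2 \<subseteq> S1" "stem S2 = stem S1" "body S2 \<inter> B = {}" using B[rule_format, OF S1(1)] by blast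
    have "body S2 \<inter> A = {}" using body_mono[OF S2(2)] S1(4) by blast
    then show "\<exists>S. alpha_tree U a S \<and> S \<subseteq> T \<and> stem S = stem T \<and> body S \<inter> (A \<union> B) = {}"
      using S1 S2 by (intro exI[of _ S2]) auto
  qed
  have part2: "alpha_Ramsey_null U a XX \<longleftrightarrow> meager_in E XX"
    using null_meager[OF _ subT] meager_null by blast
  have "alpha_Ramsey U a XX \<longleftrightarrow> Baire_property_in E XX"
  proof
    assume R: "alpha_Ramsey U a XX"
    define G where "G = \<Union>{body S | S. alpha_tree U a S \<and> body S \<subseteq> XX}"
    have Gopen: "openin E G" unfolding G_def by (rule openin_Union) (auto intro: open_body)
    have GT: "G \<subseteq> topspace E" using openin_subset[OF Gopen] .
    have n1: "alpha_Ramsey_null U a ((XX - G) \<union> (G - XX))"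
      unfolding alpha_Ramsey_null_def
    proof (intro allI impI)
      fix T assume T: "alpha_tree U a T"
      obtain S where S: "alpha_tree U a S" "S \<subseteq> T" "stem S = stem T" "body S \<subseteq> XX \<or> body S \<inter> XX = {}"
        using R[unfolded alpha_Ramsey_def, rule_format, OF T] by blast
      have "body S \<inter> ((XX - G) \<union> (G - XX)) = {}"
      proof (cases "body S \<subseteq> XX")
        case True
        then have "body S \<subseteq> G" unfolding G_def using S(1) by blast
        then show ?thesis using True by blast
      next
        case False
        then have dis: "body S \<inter> XX = {}" using S(4) by blast
        have "body S \<inter> G = {}"
        proof (rule ccontr)
          assume "body S \<inter> G \<noteq> {}"
          then obtain Y R' where Y: "Y \<in> body S" "Y \<in> body R'" "alpha_tree U a R'" "body R' \<subseteq> XX"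
            unfolding G_def by blast
          have oSR: "openin E (body S \<inter> body R')" using openin_Int[OF open_body[OF S(1)] open_body[OF Y(3)]] .
          have "Y \<in> body S \<inter> body R'" using Y(1,2) by blast
          then obtain Q where Q: "alpha_tree U a Q" "Y \<in> body Q" "body Q \<subseteq> body S \<inter> body R'"
            using open_basis[OF oSR] by blast
          then show False using dis Y(4) by blast
        qed
        then show ?thesis using dis by blast
      qed
      then show "\<exists>S. alpha_tree U a S \<and> S \<subseteq> T \<and> stem S = stem T \<and> body S \<inter> ((XX - G) \<union> (G - XX)) = {}"
        using S by blast
    qed
    have "(XX - G) \<union> (G - XX) \<subseteq> topspace E" using subT GT by blast
    then have "meager_in E ((XX - G) \<union> (G - XX))" using null_meager[OF n1] by blast
    then show "Baire_property_in E XX" unfolding Baire_property_in_def using subT Gopen by blast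
  next
    assume B: "Baire_property_in E XX"
    then have "\<exists>G. openin E G \<and> meager_in E ((XX - G) \<union> (G - XX))" unfolding Baire_property_in_def by (rule conjunct2)
    then obtain G where G: "openin E G" "meager_in E ((XX - G) \<union> (G - XX))" by blast
    have nl: "alpha_Ramsey_null U a ((XX - G) \<union> (G - XX))" using meager_null[OF G(2)] .
    show "alpha_Ramsey U a XX" unfolding alpha_Ramsey_def
    proof (intro allI impI)
      fix T assume T: "alpha_tree U a T"
      obtain S1 where S1: "alpha_tree U a S1" "S1 \<subseteq> T" "stem S1 = stem T" "body S1 \<inter> ((XX - G) \<union> (G - XX)) = {}"
        using nl[unfolded alpha_Ramsey_null_def, rule_format, OF T] by blast
      obtain S2 where S2: "alpha_tree U a S2" "S2 \<subseteq> S1" "stem S2 = stem S1" "body S2 \<subseteq> G \<or> body S2 \<inter> G = {}"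
        using open_ramsey[OF S1(1) G(1)] by blast
      have b: "body S2 \<subseteq> body S1" using body_mono[OF S2(2)] .
      have "body S2 \<subseteq> XX \<or> body S2 \<inter> XX = {}" using S2(4) b S1(4) by blast
      then show "\<exists>S. alpha_tree U a S \<and> S \<subseteq> T \<and> stem S = stem T \<and> (body S \<subseteq> XX \<or> body S \<inter> XX = {})"
        using S1 S2 by (intro exI[of _ S2]) auto
    qed
  qed
  then show ?thesis using part2 by blast
qed

end

theorem mainTheorem5:
  fixes U :: "nat set set" and a :: "nat set \<Rightarrow> nat \<Rightarrow> nat"
  assumes "alpha_model U"
    and "\<And>s. finite s \<Longrightarrow> nonstandard_hypernat U (a s)"
  shows "\<forall>\<X>. \<X> \<subseteq> {X. infinite X} \<longrightarrow>
           (alpha_Ramsey U a \<X> \<longleftrightarrow> Baire_property_in (alpha_Ellentuck U a) \<X>) \<and>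
           (alpha_Ramsey_null U a \<X> \<longleftrightarrow> meager_in (alpha_Ellentuck U a) \<X>)"
proof -
  interpret AM U a using assms by (rule AM.intro)
  show ?thesis using main_AM by blast
qed


end
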